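(* Let $X$ be a proper geodesic $\mathrm{CAT}(-1)$ metric space and $\epsilon>0$, and let $$c_0(\epsilon)=2\log\left(\frac{2(1+e^{\epsilon/2})\sinh\epsilon}{\epsilon}\right).$$ For all points $a,b,a',b'\in X$ such that $d(a,a')\le\epsilon$, $d(b,b')\le\epsilon$ and $d(a,b)\ge c_0(\epsilon)$, if $m$ is the midpoint of the geodesic segment $[a,b]$, then $d(m,[a',b'])\le\epsilon/2$. *)

theory Defs
  imports "HOL-Analysis.Analysis"
begin

text \<open>A metric space is modelled as a subset X of a metric_space type with the induced metric.\<close>

definition proper_space :: "'a::metric_space set \<Rightarrow> bool" where
  "proper_space X \<longleftrightarrow> (\<forall>x\<in>X. \<forall>r. compact (cball x r \<inter> X))"

definition geodesic_segment_between :: "'a::metric_space set \<Rightarrow> 'a set \<Rightarrow> 'a \<Rightarrow> 'a \<Rightarrow> bool" where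
  "geodesic_segment_between X S a b \<longleftrightarrow>
     (\<exists>\<gamma>::real \<Rightarrow> 'a. \<gamma> ` {0..dist a b} = S \<and> S \<subseteq> X \<and> \<gamma> 0 = a \<and> \<gamma> (dist a b) = b \<and>
        (\<forall>s\<in>{0..dist a b}. \<forall>t\<in>{0..dist a b}. dist (\<gamma> s) (\<gamma> t) = \<bar>s - t\<bar>))"

definition geodesic_space :: "'a::metric_space set \<Rightarrow> bool" where
  "geodesic_space X \<longleftrightarrow> (\<forall>a\<in>X. \<forall>b\<in>X. \<exists>S. geodesic_segment_between X S a b)"

text \<open>The real hyperbolic plane (curvature -1), upper half-plane model.\<close>
definition hyp_plane :: "complex set" where
  "hyp_plane = {z. Im z > 0}"

definition hdist :: "complex \<Rightarrow> complex \<Rightarrow> real" where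
  "hdist z w = arcosh (1 + (cmod (z - w))\<^sup>2 / (2 * Im z * Im w))"

text \<open>Given a geodesic triangle with vertices x y z and sides Sxy Syz Sxz, and a
  comparison triangle x' y' z' in the hyperbolic plane, p' is a comparison point for p
  if p lies on a side and p' lies on the corresponding side of the comparison triangle
  at the same distances from its endpoints (in the uniquely geodesic hyperbolic plane
  this determines the point on the comparison side).\<close>
definition comparison_point ::
  "'a::metric_space \<Rightarrow> 'a \<Rightarrow> 'a \<Rightarrow> 'a set \<Rightarrow> 'a set \<Rightarrow> 'a set \<Rightarrow>
   complex \<Rightarrow> complex \<Rightarrow> complex \<Rightarrow> 'a \<Rightarrow> complex \<Rightarrow> bool" where
  "comparison_point x y z Sxy Syz Sxz x' y' z' p p' \<longleftrightarrow> p' \<in> hyp_plane \<and>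
     ((p \<in> Sxy \<and> hdist x' p' = dist x p \<and> hdist p' y' = dist p y) \<or>
      (p \<in> Syz \<and> hdist y' p' = dist y p \<and> hdist p' z' = dist p z) \<or>
      (p \<in> Sxz \<and> hdist x' p' = dist x p \<and> hdist p' z' = dist p z))"

definition CAT_minus1 :: "'a::metric_space set \<Rightarrow> bool" where
  "CAT_minus1 X \<longleftrightarrow>
    (\<forall>x\<in>X. \<forall>y\<in>X. \<forall>z\<in>X. \<forall>Sxy Syz Sxz.
      geodesic_segment_between X Sxy x y \<and> geodesic_segment_between X Syz y z \<and>
      geodesic_segment_between X Sxz x z \<longrightarrow>
      (\<forall>x' y' z'. x' \<in> hyp_plane \<and> y' \<in> hyp_plane \<and> z' \<in> hyp_plane \<and>
         hdist x' y' = dist x y \<and> hdist y' z' = dist y z \<and> hdist x' z' = dist x z \<longrightarrow>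
         (\<forall>p q p' q'. comparison_point x y z Sxy Syz Sxz x' y' z' p p' \<and>
                      comparison_point x y z Sxy Syz Sxz x' y' z' q q' \<longrightarrow>
                      dist p q \<le> hdist p' q')))"

definition c0 :: "real \<Rightarrow> real" where
  "c0 \<epsilon> = 2 * ln (2 * (1 + exp (\<epsilon> / 2)) * sinh \<epsilon> / \<epsilon>)"

end

theory Submission
  imports Defs
begin
lemma alg:
  fixes c1 h1 g1 t1 c2 h2 g2 t2 :: real
  assumes "c1^2 = h1^2 + 1" "c2^2 = h2^2+1" "g1^2 + t1^2 = 1" "g2^2+t2^2 = 1"
    "c1 - h1*g1 \<noteq> 0" "c2 - h2*g2 \<noteq> 0"
  shows "1 + ((h1*t1/(c1 - h1*g1) - h2*t2/(c2-h2*g2))^2 + (1/(c1 - h1*g1) - 1/(c2-h2*g2))^2)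
     / (2 * (1/(c1 - h1*g1)) * (1/(c2-h2*g2))) = c1*c2 - h1*h2*(g1*g2+t1*t2)"
proof -
  define k1 where "k1 = c1 - h1*g1"
  define k2 where "k2 = c2 - h2*g2"
  have k1: "k1 \<noteq> 0" and k2: "k2 \<noteq> 0" using assms k1_def k2_def by auto
  have e1: "(h1*t1)^2 + 1 = k1*(2*c1 - k1)" unfolding k1_def
  proof -
    have "(h1*t1)^2 = h1^2 * t1^2" by (simp add: power_mult_distrib)
    also have "\<dots> = h1^2 * (1 - g1^2)" using assms(3) by simp
    finally show "(h1*t1)^2 + 1 = (c1 - h1*g1)*(2*c1 - (c1 - h1*g1))" using assms(1)
      by (simp add: algebra_simps power2_eq_square)
  qed
  have e2: "(h2*t2)^2 + 1 = k2*(2*c2 - k2)" unfolding k2_def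
  proof -
    have "(h2*t2)^2 = h2^2 * t2^2" by (simp add: power_mult_distrib)
    also have "\<dots> = h2^2 * (1 - g2^2)" using assms(4) by simp
    finally show "(h2*t2)^2 + 1 = (c2 - h2*g2)*(2*c2 - (c2 - h2*g2))" using assms(2)
      by (simp add: algebra_simps power2_eq_square)
  qed
  have "1 + ((h1*t1/k1 - h2*t2/k2)^2 + (1/k1 - 1/k2)^2) / (2 * (1/k1) * (1/k2))
     = 1 + ((h1*t1*k2 - h2*t2*k1)^2 + (k2 - k1)^2) / (2*k1*k2)"
    using k1 k2 by (simp add: field_simps power2_eq_square)
  also have "(h1*t1*k2 - h2*t2*k1)^2 + (k2 - k1)^2 = k2^2*((h1*t1)^2+1) + k1^2*((h2*t2)^2+1) - 2*k1*k2*(h1*t1*h2*t2) - 2*k1*k2"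
    by (simp add: algebra_simps power2_eq_square)
  also have "\<dots> = k2^2*(k1*(2*c1 - k1)) + k1^2*(k2*(2*c2 - k2)) - 2*k1*k2*(h1*t1*h2*t2) - 2*k1*k2"
    using e1 e2 by simp
  also have "\<dots> = 2*k1*k2 * (c1*k2 + c2*k1 - k1*k2 - h1*t1*h2*t2 - 1)"
    by (simp add: algebra_simps power2_eq_square)
  finally have "1 + ((h1*t1/k1 - h2*t2/k2)^2 + (1/k1 - 1/k2)^2) / (2 * (1/k1) * (1/k2))
     = c1*k2 + c2*k1 - k1*k2 - h1*t1*h2*t2" using k1 k2 by simp
  also have "\<dots> = c1*c2 - h1*h2*(g1*g2+t1*t2)" unfolding k1_def k2_def
    by (simp add: algebra_simps)
  finally show ?thesis unfolding k1_def k2_def .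
qed
definition hp :: "real \<Rightarrow> real \<Rightarrow> real \<Rightarrow> complex" where
  "hp r g t = Complex (sinh r * t / (cosh r - sinh r * g)) (1 / (cosh r - sinh r * g))"

lemma hp_k_pos: fixes r g :: real assumes "r \<ge> 0" "g \<le> 1" shows "cosh r - sinh r * g > 0"
proof -
  have "sinh r * g \<le> sinh r" using assms mult_left_le[of g "sinh r"] by simp
  moreover have "cosh r - sinh r > 0" using cosh_minus_sinh[of r] by simp
  ultimately show ?thesis by linarith
qed

lemma hp_in: assumes "r \<ge> 0" "g \<le> 1" shows "hp r g t \<in> hyp_plane"
  using hp_k_pos[OF assms] by (simp add: hp_def hyp_plane_def)

lemma hp_dist:
  assumes "r1 \<ge> 0" "g1 \<le> 1" "g1^2 + t1^2 = 1" "r2 \<ge> 0" "g2 \<le> 1" "g2^2 + t2^2 = 1"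
  shows "hdist (hp r1 g1 t1) (hp r2 g2 t2) = arcosh (cosh r1 * cosh r2 - sinh r1 * sinh r2 * (g1*g2+t1*t2))"
proof -
  have k1: "cosh r1 - sinh r1 * g1 \<noteq> 0" using hp_k_pos[OF assms(1,2)] by simp
  have k2: "cosh r2 - sinh r2 * g2 \<noteq> 0" using hp_k_pos[OF assms(4,5)] by simp
  show ?thesis unfolding hdist_def
    apply (subst alg[symmetric, OF cosh_square_eq cosh_square_eq assms(3) assms(6) k1 k2])
    by (simp add: hp_def cmod_power2)
qed

lemma geo_param:
  assumes "geodesic_segment_between X S a b"
  obtains g where "g ` {0..dist a b} = S" "S \<subseteq> X" "g 0 = a" "g (dist a b) = b"
    "\<And>s t. s \<in> {0..dist a b} \<Longrightarrow> t \<in> {0..dist a b} \<Longrightarrow> dist (g s) (g t) = \<bar>s - t\<bar>"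
  using assms unfolding geodesic_segment_between_def by blast

lemma geo_sum:
  assumes "geodesic_segment_between X S a b" "p \<in> S"
  shows "dist a p + dist p b = dist a b"
proof -
  obtain g where g: "g ` {0..dist a b} = S" "S \<subseteq> X" "g 0 = a" "g (dist a b) = b"
    "\<And>s t. s \<in> {0..dist a b} \<Longrightarrow> t \<in> {0..dist a b} \<Longrightarrow> dist (g s) (g t) = \<bar>s - t\<bar>"
    using geo_param[OF assms(1)] by blast
  obtain t where t: "t \<in> {0..dist a b}" "p = g t" using g(1) assms(2) by blast
  have "dist a p = t" using g(5)[of 0 t] t g(3) by auto
  moreover have "dist p b = dist a b - t" using g(5)[of t "dist a b"] t g(4) by auto
  ultimately show ?thesis by simp
qed

lemma geo_point:
  assumes "geodesic_segment_between X S a b" "0 \<le> s" "s \<le> dist a b"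
  shows "\<exists>p\<in>S. dist a p = s"
proof -
  obtain g where g: "g ` {0..dist a b} = S" "S \<subseteq> X" "g 0 = a" "g (dist a b) = b"
    "\<And>s t. s \<in> {0..dist a b} \<Longrightarrow> t \<in> {0..dist a b} \<Longrightarrow> dist (g s) (g t) = \<bar>s - t\<bar>"
    using geo_param[OF assms(1)] by blast
  have "g s \<in> S" using g(1) assms(2,3) by auto
  moreover have "dist a (g s) = s" using g(5)[of 0 s] g(3) assms(2,3) by auto
  ultimately show ?thesis by blast
qed

lemma geo_rev:
  assumes "geodesic_segment_between X S a b"
  shows "geodesic_segment_between X S b a"
proof -
  obtain g where g: "g ` {0..dist a b} = S" "S \<subseteq> X" "g 0 = a" "g (dist a b) = b"
    "\<And>s t. s \<in> {0..dist a b} \<Longrightarrow> t \<in> {0..dist a b} \<Longrightarrow> dist (g s) (g t) = \<bar>s - t\<bar>"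
    using geo_param[OF assms(1)] by blast
  define L where "L = dist a b"
  define h where "h = (\<lambda>t. g (L - t))"
  have "h ` {0..L} = g ` ((\<lambda>t. L - t) ` {0..L})" unfolding h_def by (rule image_image[symmetric])
  also have "(\<lambda>t. L - t) ` {0..L} = {0..L}"
  proof
    show "(\<lambda>t. L - t) ` {0..L} \<subseteq> {0..L}" by auto
    show "{0..L} \<subseteq> (\<lambda>t. L - t) ` {0..L}"
    proof
      fix x assume "x \<in> {0..L}"
      then have "L - x \<in> {0..L}" "x = L - (L - x)" by auto
      then show "x \<in> (\<lambda>t. L - t) ` {0..L}" by blast
    qed
  qed
  finally have im: "h ` {0..L} = S" using g(1) L_def by simp
  have "dist b a = L" using L_def by (simp add: dist_commute)
  moreover have "h 0 = b" "h L = a" using g(3,4) L_def h_def by auto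
  moreover have "\<forall>s\<in>{0..L}. \<forall>t\<in>{0..L}. dist (h s) (h t) = \<bar>s - t\<bar>"
    using g(5) L_def h_def by auto
  ultimately show ?thesis unfolding geodesic_segment_between_def using im g(2) by metis
qed

lemma arcosh_cosh_abs: "arcosh (cosh (x::real)) = \<bar>x\<bar>"
  by (metis abs_ge_zero arcosh_cosh_real cosh_real_abs)

lemma cat_bound:
  assumes cat: "CAT_minus1 X" and geo: "geodesic_space X"
    and z0: "z0 \<in> X" and x: "x \<in> X" and y: "y \<in> X"
    and Sx: "geodesic_segment_between X Sx z0 x" and Sy: "geodesic_segment_between X Sy z0 y"
    and A: "dist z0 x > 0" and B: "dist z0 y > 0"
    and p: "p \<in> Sx" and q: "q \<in> Sy" and ps: "dist z0 p = s" and qs: "dist z0 q = s"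
  shows "dist p q \<le> arcosh (1 + sinh s ^ 2 * (cosh (dist x y) - cosh (dist z0 x - dist z0 y))
            / (sinh (dist z0 x) * sinh (dist z0 y)))"
proof -
  define a where "a = dist z0 x"
  define b where "b = dist z0 y"
  define c where "c = dist x y"
  obtain Sxy where Sxy: "geodesic_segment_between X Sxy x y" using geo x y unfolding geodesic_space_def by blast
  have px: "dist p x = a - s" using geo_sum[OF Sx p] ps a_def by simp
  have qy: "dist q y = b - s" using geo_sum[OF Sy q] qs b_def by simp
  have s0: "s \<ge> 0" using ps by auto
  have sa: "s \<le> a" "s \<le> b" using px qy by (metis diff_ge_0_iff_ge zero_le_dist)+
  have a0: "a > 0" and b0: "b > 0" using A B a_def b_def by auto
  have sab: "sinh a * sinh b > 0" using a0 b0 by simp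
  have c1: "c \<le> a + b" using dist_triangle[of x y z0] a_def b_def c_def by (simp add: dist_commute)
  have c2: "\<bar>a - b\<bar> \<le> c" using dist_triangle[of z0 y x] dist_triangle[of z0 x y] a_def b_def c_def
    by (simp add: dist_commute abs_le_iff)
  have c0: "c \<ge> 0" using c_def by simp
  define g where "g = (cosh a * cosh b - cosh c) / (sinh a * sinh b)"
  have "cosh c \<le> cosh (a + b)" using c1 c0 a0 b0 by (subst cosh_real_nonneg_le_iff) auto
  then have g1: "g \<ge> -1" using sab unfolding g_def cosh_add by (simp add: field_simps)
  have "cosh (a - b) \<le> cosh c" using c2 c0 cosh_real_abs[of "a-b"]
    by (metis abs_ge_zero cosh_real_nonneg_le_iff)
  then have g2: "g \<le> 1" using sab unfolding g_def cosh_diff by (simp add: field_simps)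
  define t where "t = sqrt (1 - g^2)"
  have gt: "g^2 + t^2 = 1" using g1 g2 unfolding t_def by (simp add: abs_square_le_1)
  have gt1: "1^2 + 0^2 = (1::real)" by simp
  define O' where "O' = hp 0 1 0"
  define X' where "X' = hp a 1 0"
  define Y' where "Y' = hp b g t"
  define P' where "P' = hp s 1 0"
  define Q' where "Q' = hp s g t"
  have hyp: "O' \<in> hyp_plane" "X' \<in> hyp_plane" "Y' \<in> hyp_plane" "P' \<in> hyp_plane" "Q' \<in> hyp_plane"
    unfolding O'_def X'_def Y'_def P'_def Q'_def using a0 b0 s0 g2 by (auto intro!: hp_in)
  have d1: "hdist O' X' = a" unfolding O'_def X'_def
    using hp_dist[OF _ _ gt1 _ _ gt1, of 0 a] a0 by (simp add: arcosh_cosh_real)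
  have d2: "hdist X' Y' = c" unfolding X'_def Y'_def
    using hp_dist[OF _ _ gt1 _ _ gt, of a b] a0 b0 g2 sab c0 by (simp add: g_def arcosh_cosh_real)
  have d3: "hdist O' Y' = b" unfolding O'_def Y'_def
    using hp_dist[OF _ _ gt1 _ _ gt, of 0 b] b0 g2 by (simp add: arcosh_cosh_real)
  have d4: "hdist O' P' = s" unfolding O'_def P'_def
    using hp_dist[OF _ _ gt1 _ _ gt1, of 0 s] s0 by (simp add: arcosh_cosh_real)
  have d5: "hdist O' Q' = s" unfolding O'_def Q'_def
    using hp_dist[OF _ _ gt1 _ _ gt, of 0 s] s0 g2 by (simp add: arcosh_cosh_real)
  have "hdist P' X' = arcosh (cosh (a - s))" unfolding P'_def X'_def
    using hp_dist[OF _ _ gt1 _ _ gt1, of s a] s0 sa a0 by (simp add: cosh_diff mult.commute)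
  then have d6: "hdist P' X' = a - s" using sa by (simp add: arcosh_cosh_real)
  have "g * g + t * t = 1" using gt by (simp add: power2_eq_square)
  then have "hdist Q' Y' = arcosh (cosh (b - s))" unfolding Q'_def Y'_def
    using hp_dist[OF _ _ gt _ _ gt, of s b] s0 sa b0 g2 by (simp add: cosh_diff mult.commute)
  then have d7: "hdist Q' Y' = b - s" using sa by (simp add: arcosh_cosh_real)
  have d8: "hdist P' Q' = arcosh (cosh s * cosh s - sinh s * sinh s * g)" unfolding P'_def Q'_def
    using hp_dist[OF _ _ gt1 _ _ gt, of s s] s0 g2 by simp
  have "cosh s * cosh s - sinh s * sinh s * g = 1 + sinh s ^ 2 * (cosh c - cosh (a - b)) / (sinh a * sinh b)"
  proof -
    have "cosh s * cosh s = 1 + sinh s ^ 2" using cosh_square_eq[of s] by (simp add: power2_eq_square)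
    moreover have "1 - g = (sinh a * sinh b - (cosh a * cosh b - cosh c)) / (sinh a * sinh b)"
      using sab a0 b0 unfolding g_def by (simp add: diff_divide_distrib)
    then have "1 - g = (cosh c - cosh (a - b)) / (sinh a * sinh b)"
      by (simp add: cosh_diff algebra_simps)
    ultimately have "cosh s * cosh s - sinh s * sinh s * g = 1 + sinh s ^ 2 * ((cosh c - cosh (a - b)) / (sinh a * sinh b))"
    proof -
      fix E assume "cosh s * cosh s = 1 + sinh s ^ 2" "1 - g = E"
      then have "g = 1 - E" by simp
      then show "cosh s * cosh s - sinh s * sinh s * g = 1 + sinh s ^ 2 * E" 
        using \<open>cosh s * cosh s = 1 + sinh s ^ 2\<close> 
        by (simp add: power2_eq_square algebra_simps) (metis distrib_right mult_1 add.commute)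
    qed
    then show ?thesis by simp
  qed
  then have d8': "hdist P' Q' = arcosh (1 + sinh s ^ 2 * (cosh c - cosh (a - b)) / (sinh a * sinh b))"
    using d8 by simp
  have cpP: "comparison_point z0 x y Sx Sxy Sy O' X' Y' p P'"
    unfolding comparison_point_def using hyp p d4 d6 ps px by simp
  have cpQ: "comparison_point z0 x y Sx Sxy Sy O' X' Y' q Q'"
    unfolding comparison_point_def using hyp q d5 d7 qs qy by simp
  have "dist p q \<le> hdist P' Q'"
    using cat z0 x y Sx Sxy Sy hyp d1 d2 d3 cpP cpQ a_def b_def c_def unfolding CAT_minus1_def
    by blast
  then show ?thesis using d8' a_def b_def c_def by simp
qed

lemma sinh_ge_self: "0 \<le> (x::real) \<Longrightarrow> x \<le> sinh x"
  by (metis exp_gt_zero ln_exp real_le_x_sinh sinh_ln_real)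

lemma cosh_gap: fixes e D :: real shows "cosh e - cosh D \<le> exp D * sinh e ^ 2 / 2"
proof -
  define f where "f = exp (-D)"
  have ef: "exp D * f = 1" unfolding f_def by (simp add: exp_minus)
  have cD: "cosh D = (exp D + f) / 2" unfolding f_def cosh_field_def by simp
  have s2: "sinh e ^ 2 = cosh e ^ 2 - 1" using cosh_square_eq[of e] by simp
  have sq: "exp D * (cosh e - f)^2 = exp D * cosh e ^ 2 - 2 * cosh e * (exp D * f) + (exp D * f) * f"
    by (simp add: power2_eq_square algebra_simps)
  have "exp D * sinh e ^ 2 / 2 - (cosh e - cosh D) = exp D * (cosh e - f)^2 / 2"
    unfolding cD s2 sq ef by (simp add: field_simps)
  moreover have "exp D * (cosh e - f)^2 / 2 \<ge> 0" by simp
  ultimately show ?thesis by linarith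
qed

lemma sinh_add_ge: fixes u w :: real assumes "u \<ge> 0" "w \<ge> 0"
  shows "sinh (u + w) \<ge> exp u * sinh w"
proof -
  have "sinh u * sinh w \<le> sinh u * cosh w" using assms sinh_le_cosh_real[of w]
    by (intro mult_left_mono) auto
  moreover have "exp u * sinh w = cosh u * sinh w + sinh u * sinh w"
    using sinh_plus_cosh[of u] by (metis add.commute distrib_right)
  ultimately have "exp u * sinh w \<le> sinh u * cosh w + cosh u * sinh w"
    by linarith
  then show ?thesis by (simp add: sinh_add)
qed

lemma real_bound:
  fixes e u w A B C :: real
  assumes e: "e > 0" and u: "u > e" and w: "w \<ge> 0" and A: "A = u + w"
    and AB: "\<bar>B - A\<bar> \<le> e" and C: "C \<le> e" "\<bar>A - B\<bar> \<le> C"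
    and key: "sinh e \<le> 2 * exp u * sinh (e/8)"
  shows "arcosh (1 + sinh w ^ 2 * (cosh C - cosh (A - B)) / (sinh A * sinh B)) \<le> e / 4"
proof -
  define D where "D = B - A"
  have C0: "C \<ge> 0" using C by linarith
  have cAB: "cosh (A - B) = cosh D" unfolding D_def by (metis cosh_minus minus_diff_eq)
  have uD: "u + D \<ge> 0" using u AB D_def by linarith
  have A0: "A > 0" using A u e w by linarith
  have B0: "B > 0" using A u e w AB by linarith
  have sAB: "sinh A * sinh B > 0" using A0 B0 by simp
  have h1: "cosh C - cosh D \<le> exp D * sinh e ^ 2 / 2"
  proof -
    have "cosh C \<le> cosh e" using C C0 e by (subst cosh_real_nonneg_le_iff) auto
    then show ?thesis using cosh_gap[of e D] by linarith
  qed
  have sA: "sinh A \<ge> exp u * sinh w" using sinh_add_ge[of u w] A u e w by simp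
  have "B = (u + D) + w" using D_def A by simp
  then have sB: "sinh B \<ge> exp (u + D) * sinh w" using sinh_add_ge[of "u + D" w] uD w
    by simp
  have h3: "sinh A * sinh B \<ge> exp (2*u + D) * sinh w ^ 2"
  proof -
    have "exp u * sinh w * (exp (u + D) * sinh w) \<le> sinh A * sinh B"
      using sA sB w A0 by (intro mult_mono) auto
    moreover have "exp u * sinh w * (exp (u + D) * sinh w) = exp (2*u + D) * sinh w ^ 2"
      by (simp add: power2_eq_square mult_exp_exp algebra_simps)
    ultimately show ?thesis by simp
  qed
  have ch: "cosh (e/4) - 1 = 2 * sinh (e/8) ^ 2"
    using cosh_double[of "e/8"] cosh_square_eq[of "e/8"] by simp
  have h4: "sinh e ^ 2 / 2 \<le> exp (2*u) * (cosh (e/4) - 1)"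
  proof -
    have "sinh e ^ 2 \<le> (2 * exp u * sinh (e/8))^2" using key e by (intro power_mono) auto
    also have "\<dots> = 4 * exp (2*u) * sinh (e/8) ^ 2"
      by (simp add: power2_eq_square mult_exp_exp algebra_simps)
    finally show ?thesis unfolding ch by simp
  qed
  define X where "X = sinh w ^ 2 * (cosh C - cosh D)"
  have "cosh \<bar>D\<bar> \<le> cosh C" using cosh_real_nonneg_le_iff[of "\<bar>D\<bar>" C] C C0 D_def
    by (simp add: abs_minus_commute)
  then have "cosh D \<le> cosh C" by simp
  then have X0: "X \<ge> 0" unfolding X_def by simp
  have "X \<le> sinh w ^ 2 * (exp D * sinh e ^ 2 / 2)" unfolding X_def using h1
    by (intro mult_left_mono) auto
  also have "\<dots> = sinh w ^ 2 * exp D * (sinh e ^ 2 / 2)" by simp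
  also have "\<dots> \<le> sinh w ^ 2 * exp D * (exp (2*u) * (cosh (e/4) - 1))"
    using h4 by (intro mult_left_mono) auto
  also have "\<dots> = (cosh (e/4) - 1) * (exp (2*u + D) * sinh w ^ 2)"
    by (simp add: exp_add algebra_simps)
  also have "\<dots> \<le> (cosh (e/4) - 1) * (sinh A * sinh B)"
    using h3 cosh_real_ge_1[of "e/4"] by (intro mult_left_mono) auto
  finally have "X / (sinh A * sinh B) \<le> cosh (e/4) - 1" using sAB by (simp add: divide_le_eq)
  then have arg: "1 + X / (sinh A * sinh B) \<le> cosh (e/4)" by simp
  have arg1: "1 \<le> 1 + X / (sinh A * sinh B)" using X0 sAB by simp
  have "arcosh (1 + X / (sinh A * sinh B)) \<le> arcosh (cosh (e/4))"
    using arg arg1 arcosh_less_iff_real[of "cosh (e/4)" "1 + X / (sinh A * sinh B)"] cosh_real_ge_1[of "e/4"]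
    by linarith
  also have "\<dots> = e/4" using e by (simp add: arcosh_cosh_real)
  finally show ?thesis unfolding X_def cAB by simp
qed

lemma c0_facts:
  fixes e L :: real
  assumes e: "e > 0" and L: "L \<ge> 2 * ln (2 * (1 + exp (e / 2)) * sinh e / e)"
  shows "L > 2 * e" "sinh e \<le> 2 * exp (L/2) * sinh (e/8)"
proof -
  define K where "K = 2 * (1 + exp (e / 2)) * sinh e / e"
  have K0: "K > 0" unfolding K_def using e by (intro divide_pos_pos mult_pos_pos) (auto intro: add_pos_pos)
  have "ln K \<le> L/2" using L K_def by simp
  then have KL: "K \<le> exp (L/2)" using K0 by (metis exp_le_cancel_iff exp_ln)
  have "exp e < K"
  proof -
    have q: "1 + e/2 + (e/2)^2/2 \<le> exp (e/2)" using exp_lower_Taylor_quadratic[of "e/2"] e by simp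
    have t: "1 + 2*e \<le> exp (2*e)" using exp_ge_add_one_self[of "2*e"] by simp
    have sh: "2 * sinh e = exp e - exp (-e)" by (simp add: sinh_field_def)
    have em: "exp (-e) = exp e / exp (2*e)"
      by (metis exp_diff mult_2 diff_add_cancel add_diff_cancel_left' minus_diff_eq diff_minus_eq_add) 
    have "exp (-e) \<le> exp e / (1 + 2*e)" unfolding em using t e
      by (intro divide_left_mono) auto
    then have "2 * sinh e \<ge> exp e * (2*e/(1+2*e))" unfolding sh using e
      by (simp add: field_simps)
    moreover have "(1 + exp (e/2)) * (2*e/(1+2*e)) > e"
    proof -
      have "(1 + exp (e/2)) * (2*e/(1+2*e)) \<ge> (2 + e/2 + (e/2)^2/2) * (2*e/(1+2*e))"
        using q e by (intro mult_right_mono) auto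
      moreover have "(2 + e/2 + (e/2)^2/2) * (2*e/(1+2*e)) > e"
      proof -
        have id: "(2 + e/2 + (e/2)^2/2) * (2*e) - e * (1+2*e) = e * ((e/2-1)^2 + 2)"
          by (simp add: power2_eq_square algebra_simps)
        have "e * ((e/2-1)^2 + 2) > 0" using e by (intro mult_pos_pos) (auto intro: add_nonneg_pos)
        then have "(2 + e/2 + (e/2)^2/2) * (2*e) > e * (1+2*e)" using id by linarith
        then show ?thesis using e by (simp add: less_divide_eq mult.assoc)
      qed
      ultimately show ?thesis by linarith
    qed
    ultimately have "(1 + exp (e/2)) * (2 * sinh e) > e * exp e"
    proof -
      assume a1: "2 * sinh e \<ge> exp e * (2*e/(1+2*e))" and a2: "(1 + exp (e/2)) * (2*e/(1+2*e)) > e"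
      have "(1 + exp (e/2)) * (2 * sinh e) \<ge> (1 + exp (e/2)) * (exp e * (2*e/(1+2*e)))"
        using a1 by (intro mult_left_mono) (auto intro: add_nonneg_nonneg)
      moreover have "(1 + exp (e/2)) * (exp e * (2*e/(1+2*e))) = exp e * ((1 + exp (e/2)) * (2*e/(1+2*e)))"
        by simp
      moreover have "exp e * ((1 + exp (e/2)) * (2*e/(1+2*e))) > exp e * e"
        using a2 by (intro mult_strict_left_mono) auto
      moreover have "exp e * e = e * exp e" by simp
      ultimately show ?thesis by linarith
    qed
    then show ?thesis unfolding K_def using e by (simp add: field_simps)
  qed
  then have "exp e < exp (L/2)" using KL by linarith
  then show "L > 2 * e" by simp
  have "sinh e \<le> 4 * (1 + exp (e/2)) * sinh e * sinh (e/8) / e"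
  proof -
    have "e/8 \<le> sinh (e/8)" using sinh_ge_self[of "e/8"] e by simp
    moreover have "2 \<le> 1 + exp (e/2)" using e by simp
    ultimately have "2 * (e/8) \<le> (1 + exp (e/2)) * sinh (e/8)"
      using e by (intro mult_mono) auto
    then have "sinh e * (e/4) \<le> sinh e * ((1 + exp (e/2)) * sinh (e/8))"
      using e by (intro mult_left_mono) auto
    then show ?thesis using e by (simp add: field_simps)
  qed
  also have "\<dots> = 2 * K * sinh (e/8)" unfolding K_def by simp
  also have "\<dots> \<le> 2 * exp (L/2) * sinh (e/8)" using KL K0 e by (intro mult_mono) auto
  finally show "sinh e \<le> 2 * exp (L/2) * sinh (e/8)" .
qed

theorem lemma2p2:
  fixes X :: "'a::metric_space set" and \<epsilon> :: real and a b a' b' m :: 'a and S S' :: "'a set"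
  assumes "proper_space X" and "geodesic_space X" and "CAT_minus1 X"
    and "\<epsilon> > 0"
    and "a \<in> X" "b \<in> X" "a' \<in> X" "b' \<in> X"
    and "dist a a' \<le> \<epsilon>" "dist b b' \<le> \<epsilon>" "dist a b \<ge> c0 \<epsilon>"
    and "geodesic_segment_between X S a b" "m \<in> S" "dist a m = dist a b / 2"
    and "geodesic_segment_between X S' a' b'"
  shows "infdist m S' \<le> \<epsilon> / 2"
proof -
  note geo = assms(2) and cat = assms(3) and e = assms(4)
  note aX = assms(5) and bX = assms(6) and a'X = assms(7) and b'X = assms(8)
  note aa' = assms(9) and bb' = assms(10) and S = assms(12) and m = assms(13) and am = assms(14)
  note S' = assms(15)
  define L where "L = dist a b"
  define L1 where "L1 = dist a b'"
  define L2 where "L2 = dist b' a'"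
  have cf: "L > 2 * \<epsilon>" "sinh \<epsilon> \<le> 2 * exp (L/2) * sinh (\<epsilon>/8)"
    using c0_facts[OF e, of L] assms(11) unfolding L_def c0_def by auto
  have LL1: "\<bar>L1 - L\<bar> \<le> dist b b'" using dist_triangle[of a b b'] dist_triangle[of a b' b]
    unfolding L_def L1_def by (simp add: dist_commute abs_le_iff)
  have L1L2: "\<bar>L2 - L1\<bar> \<le> dist a a'" using dist_triangle[of b' a a'] dist_triangle[of b' a' a]
    unfolding L2_def L1_def by (simp add: dist_commute abs_le_iff)
  obtain T where T: "geodesic_segment_between X T a b'" using geo aX b'X unfolding geodesic_space_def by blast
  have hL1: "L/2 \<le> L1" "L1 > \<epsilon>" using LL1 bb' cf(1) by linarith+
  have "\<exists>p\<in>T. dist a p = L/2" using geo_point[OF T, of "L/2"] hL1 cf(1) e unfolding L1_def by linarith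
  then obtain n where n: "n \<in> T" "dist a n = L/2" by blast
  have mn: "dist m n \<le> \<epsilon>/4"
  proof -
    have "dist m n \<le> arcosh (1 + sinh (L/2) ^ 2 * (cosh (dist b b') - cosh (dist a b - dist a b'))
            / (sinh (dist a b) * sinh (dist a b')))"
    proof -
      have "dist a b > 0" "dist a b' > 0" "dist a m = L/2" using hL1 cf(1) e am unfolding L_def L1_def by auto
      from cat_bound[OF cat geo aX bX b'X S T this(1,2) m n(1) this(3) n(2)] show ?thesis
        unfolding L_def .
    qed
    also have "\<dots> \<le> \<epsilon>/4"
      using real_bound[OF e, of "L/2" "L/2" L L1 "dist b b'"] cf LL1 bb'
      unfolding L_def L1_def by (simp add: abs_minus_commute)
    finally show ?thesis .
  qed
  have Tr: "geodesic_segment_between X T b' a" using geo_rev[OF T] .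
  have S'r: "geodesic_segment_between X S' b' a'" using geo_rev[OF S'] .
  have nb': "dist b' n = L1 - L/2" using geo_sum[OF T n(1)] n(2) unfolding L1_def
    by (simp add: dist_commute)
  have hL2: "L1 - L/2 \<le> L2" "L2 > 0" using L1L2 aa' hL1 cf(1) by linarith+
  have "\<exists>p\<in>S'. dist b' p = L1 - L/2" using geo_point[OF S'r, of "L1 - L/2"] hL2 hL1 unfolding L2_def by linarith
  then obtain k where k: "k \<in> S'" "dist b' k = L1 - L/2" by blast
  have nk: "dist n k \<le> \<epsilon>/4"
  proof -
    have "dist n k \<le> arcosh (1 + sinh (L1 - L/2) ^ 2 * (cosh (dist a a') - cosh (dist b' a - dist b' a'))
            / (sinh (dist b' a) * sinh (dist b' a')))"
    proof -
      have "dist b' a > 0" "dist b' a' > 0" using hL1 hL2 cf(1) e unfolding L1_def L2_def by (auto simp: dist_commute)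
      from cat_bound[OF cat geo b'X aX a'X Tr S'r this(1,2) n(1) k(1) nb' k(2)] show ?thesis .
    qed
    also have "\<dots> \<le> \<epsilon>/4"
      using real_bound[OF e, of "L/2" "L1 - L/2" L1 L2 "dist a a'"] cf LL1 L1L2 bb' aa'
      unfolding L2_def L1_def by (simp add: abs_minus_commute dist_commute)
    finally show ?thesis .
  qed
  have "infdist m S' \<le> dist m k" using k(1) by (rule infdist_le)
  also have "\<dots> \<le> dist m n + dist n k" by (rule dist_triangle)
  finally show ?thesis using mn nk by simp
qed

end
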